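(* Let $\mathcal{M}$ be a topological space, $T:\mathcal{M}\to\mathcal{M}$ a map, and $\mu$ a positive measure on $\mathcal{M}$ such that $\phi\mapsto\phi\circ T$ is a well-defined operator $\mathcal{K}:L_2(\mu)\to L_2(\mu)$, and assume $\mathcal{K}$ is bounded. Let $(\psi_i)_{i=1}^\infty$ be an orthonormal basis of $L_2(\mu)$, $\mathcal{F}_N=\mathrm{span}\{\psi_1,\dots,\psi_N\}$, $P_N^\mu$ the $L_2(\mu)$-orthogonal projection onto $\mathcal{F}_N$, and $\mathcal{K}_N=P_N^\mu\mathcal{K}|_{\mathcal{F}_N}:\mathcal{F}_N\to\mathcal{F}_N$. Suppose that for each $N$, $\lambda_N\in\mathbb{C}$ is an eigenvalue of $\mathcal{K}_N$ with associated eigenfunction $\phi_N\in\mathcal{F}_N$, $\|\phi_N\|_{L_2(\mu)}=1$. Then there exists a subsequence $(\lambda_{N_i},\phi_{N_i})$ such that $\lim_{i\to\infty}\lambda_{N_i}=\lambda$ and $\phi_{N_i}$ converges weakly in $L_2(\mu)$ to $\phi$, where $\lambda\in\mathbb{C}$ and $\phi\in L_2(\mu)$ satisfy $\mathcal{K}\phi=\lambda\phi$. In particular, if $\|\phi\|\neq0$, then $\lambda$ is an eigenvalue of $\mathcal{K}$ with eigenfunction $\phi$.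
   Context: $\mathcal{K}\phi=\phi\circ T$ is the Koopman operator. $P_N^\mu\phi=\operatorname{arg\,min}_{f\in\mathcal{F}_N}\|f-\phi\|_{L_2(\mu)}$. Weak convergence $f_i\to f$ means $\int f_i\overline{g}\,d\mu\to\int f\overline{g}\,d\mu$ for all $g\in L_2(\mu)$. *)

theory Defs
  imports "HOL-Analysis.Analysis"
begin

text \<open>Concrete model of the complex Hilbert space L_2(mu): square-integrable
  complex-valued measurable functions, elements identified up to mu-a.e. equality
  (all statements below are invariant under a.e. modification).\<close>

definition L2 :: "'a measure \<Rightarrow> ('a \<Rightarrow> complex) set" where
  "L2 M = {f. f \<in> borel_measurable M \<and> integrable M (\<lambda>x. (norm (f x))\<^sup>2)}"

definition l2inner :: "'a measure \<Rightarrow> ('a \<Rightarrow> complex) \<Rightarrow> ('a \<Rightarrow> complex) \<Rightarrow> complex" where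
  "l2inner M f g = (\<integral>x. f x * cnj (g x) \<partial>M)"

definition l2norm :: "'a measure \<Rightarrow> ('a \<Rightarrow> complex) \<Rightarrow> real" where
  "l2norm M f = sqrt (\<integral>x. (norm (f x))\<^sup>2 \<partial>M)"

definition koopman_bounded :: "'a measure \<Rightarrow> ('a \<Rightarrow> 'a) \<Rightarrow> bool" where
  "koopman_bounded M T \<longleftrightarrow>
     (\<forall>f\<in>L2 M. f \<circ> T \<in> L2 M) \<and>
     (\<forall>f\<in>L2 M. \<forall>g\<in>L2 M. (AE x in M. f x = g x) \<longrightarrow> (AE x in M. f (T x) = g (T x))) \<and>
     (\<exists>C. \<forall>f\<in>L2 M. l2norm M (f \<circ> T) \<le> C * l2norm M f)"

definition orthonormal_basis :: "'a measure \<Rightarrow> (nat \<Rightarrow> 'a \<Rightarrow> complex) \<Rightarrow> bool" where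
  "orthonormal_basis M \<psi> \<longleftrightarrow>
     (\<forall>i. \<psi> i \<in> L2 M) \<and>
     (\<forall>i j. l2inner M (\<psi> i) (\<psi> j) = (if i = j then 1 else 0)) \<and>
     (\<forall>f\<in>L2 M. (\<forall>i. l2inner M f (\<psi> i) = 0) \<longrightarrow> (AE x in M. f x = 0))"

text \<open>F_N = span of the first N basis functions (psi 0, ..., psi (N-1)).\<close>
definition in_FN :: "'a measure \<Rightarrow> (nat \<Rightarrow> 'a \<Rightarrow> complex) \<Rightarrow> nat \<Rightarrow> ('a \<Rightarrow> complex) \<Rightarrow> bool" where
  "in_FN M \<psi> N f \<longleftrightarrow> f \<in> L2 M \<and>
     (\<exists>c :: nat \<Rightarrow> complex. AE x in M. f x = (\<Sum>i<N. c i * \<psi> i x))"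

definition projN :: "'a measure \<Rightarrow> (nat \<Rightarrow> 'a \<Rightarrow> complex) \<Rightarrow> nat \<Rightarrow> ('a \<Rightarrow> complex) \<Rightarrow> ('a \<Rightarrow> complex)" where
  "projN M \<psi> N f = (\<lambda>x. \<Sum>i<N. l2inner M f (\<psi> i) * \<psi> i x)"

definition eigenpair_KN :: "'a measure \<Rightarrow> ('a \<Rightarrow> 'a) \<Rightarrow> (nat \<Rightarrow> 'a \<Rightarrow> complex) \<Rightarrow> nat
    \<Rightarrow> complex \<Rightarrow> ('a \<Rightarrow> complex) \<Rightarrow> bool" where
  "eigenpair_KN M T \<psi> N lam phi \<longleftrightarrow> in_FN M \<psi> N phi \<and>
     (AE x in M. projN M \<psi> N (phi \<circ> T) x = lam * phi x)"

definition weak_conv :: "'a measure \<Rightarrow> (nat \<Rightarrow> 'a \<Rightarrow> complex) \<Rightarrow> ('a \<Rightarrow> complex) \<Rightarrow> bool" where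
  "weak_conv M fs f \<longleftrightarrow> (\<forall>g\<in>L2 M. (\<lambda>i. l2inner M (fs i) g) \<longlonglongrightarrow> l2inner M f g)"

end

theory Submission
  imports Defs "HOL-Library.Diagonal_Subsequence"
begin

definition sq2 :: "'a measure \<Rightarrow> ('a \<Rightarrow> complex) \<Rightarrow> real" where
  "sq2 M f = (\<integral>x. (cmod (f x))\<^sup>2 \<partial>M)"

lemma borel_measurable_cnj'[measurable]:
  "f \<in> borel_measurable M \<Longrightarrow> (\<lambda>x. cnj (f x)) \<in> borel_measurable M"
  by (rule borel_measurable_continuous_on[where f=cnj]) (auto intro: continuous_intros)

lemma L2_D: "f \<in> L2 M \<Longrightarrow> f \<in> borel_measurable M"
  "f \<in> L2 M \<Longrightarrow> integrable M (\<lambda>x. (cmod (f x))\<^sup>2)"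
  by (auto simp: L2_def)

lemma L2_I: "f \<in> borel_measurable M \<Longrightarrow> integrable M (\<lambda>x. (cmod (f x))\<^sup>2) \<Longrightarrow> f \<in> L2 M"
  by (auto simp: L2_def)

lemma sq_ineq1: "cmod (a * cnj b) \<le> ((cmod a)\<^sup>2 + (cmod b)\<^sup>2) / 2"
proof -
  have "0 \<le> (cmod a - cmod b)\<^sup>2" by simp
  hence "2 * (cmod a * cmod b) \<le> (cmod a)\<^sup>2 + (cmod b)\<^sup>2"
    by (simp add: power2_diff)
  moreover have "cmod (a * cnj b) = cmod a * cmod b" by (simp add: norm_mult)
  ultimately show ?thesis by (simp add: field_simps)
qed

lemma sq_ineq2: "(cmod (a + b))\<^sup>2 \<le> 2 * (cmod a)\<^sup>2 + 2 * (cmod b)\<^sup>2"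
proof -
  have "cmod (a + b) \<le> cmod a + cmod b" by (rule norm_triangle_ineq)
  hence "(cmod (a + b))\<^sup>2 \<le> (cmod a + cmod b)\<^sup>2" by (simp add: power_mono)
  moreover have "0 \<le> (cmod a - cmod b)\<^sup>2" by simp
  ultimately show ?thesis by (simp add: power2_sum power2_diff)
qed

lemma L2_zero[simp]: "(\<lambda>x. 0) \<in> L2 M"
  by (auto simp: L2_def)

lemma L2_add: assumes "f \<in> L2 M" "g \<in> L2 M" shows "(\<lambda>x. f x + g x) \<in> L2 M"
proof (rule L2_I)
  have [measurable]: "f \<in> borel_measurable M" "g \<in> borel_measurable M" using assms by (auto dest: L2_D)
  show "(\<lambda>x. f x + g x) \<in> borel_measurable M" by measurable
  show "integrable M (\<lambda>x. (cmod (f x + g x))\<^sup>2)"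
  proof (rule Bochner_Integration.integrable_bound)
    show "integrable M (\<lambda>x. 2 * (cmod (f x))\<^sup>2 + 2 * (cmod (g x))\<^sup>2)"
      using assms by (auto dest!: L2_D intro!: Bochner_Integration.integrable_add Bochner_Integration.integrable_mult_right)
    show "(\<lambda>x. (cmod (f x + g x))\<^sup>2) \<in> borel_measurable M" by measurable
    show "AE x in M. norm ((cmod (f x + g x))\<^sup>2) \<le> norm (2 * (cmod (f x))\<^sup>2 + 2 * (cmod (g x))\<^sup>2)"
      using sq_ineq2 by auto
  qed
qed

lemma L2_cmult: assumes "f \<in> L2 M" shows "(\<lambda>x. c * f x) \<in> L2 M"
proof (rule L2_I)
  have [measurable]: "f \<in> borel_measurable M" using assms by (auto dest: L2_D)
  show "(\<lambda>x. c * f x) \<in> borel_measurable M" by measurable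
  have "integrable M (\<lambda>x. (cmod c)\<^sup>2 * (cmod (f x))\<^sup>2)" using assms by (auto dest: L2_D)
  then show "integrable M (\<lambda>x. (cmod (c * f x))\<^sup>2)" by (simp add: norm_mult power_mult_distrib)
qed

lemma L2_uminus: assumes "f \<in> L2 M" shows "(\<lambda>x. - f x) \<in> L2 M"
  using L2_cmult[OF assms, of "-1"] by simp

lemma L2_diff: assumes "f \<in> L2 M" "g \<in> L2 M" shows "(\<lambda>x. f x - g x) \<in> L2 M"
  using L2_add[OF assms(1) L2_uminus[OF assms(2)]] by simp

lemma L2_sum: assumes "\<And>i. i \<in> A \<Longrightarrow> f i \<in> L2 M" shows "(\<lambda>x. \<Sum>i\<in>A. f i x) \<in> L2 M"
  using assms
proof (induction A rule: infinite_finite_induct)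
  case (insert a A)
  then show ?case using L2_add[of "f a" M "\<lambda>x. \<Sum>i\<in>A. f i x"] by auto
qed auto

lemma L2_lincomb: assumes "\<And>i. i \<in> A \<Longrightarrow> f i \<in> L2 M" shows "(\<lambda>x. \<Sum>i\<in>A. c i * f i x) \<in> L2 M"
  by (rule L2_sum) (use assms L2_cmult in auto)

lemma inner_integrable: assumes "f \<in> L2 M" "g \<in> L2 M" shows "integrable M (\<lambda>x. f x * cnj (g x))"
proof (rule Bochner_Integration.integrable_bound)
  have [measurable]: "f \<in> borel_measurable M" "g \<in> borel_measurable M" using assms by (auto dest: L2_D)
  show "integrable M (\<lambda>x. ((cmod (f x))\<^sup>2 + (cmod (g x))\<^sup>2) / 2)"
    using assms by (auto dest: L2_D intro!: Bochner_Integration.integrable_add Bochner_Integration.integrable_divide)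
  show "(\<lambda>x. f x * cnj (g x)) \<in> borel_measurable M" by measurable
  show "AE x in M. norm (f x * cnj (g x)) \<le> norm (((cmod (f x))\<^sup>2 + (cmod (g x))\<^sup>2) / 2)"
    using sq_ineq1 by auto
qed

lemma inner_add1: assumes "f \<in> L2 M" "g \<in> L2 M" "h \<in> L2 M"
  shows "l2inner M (\<lambda>x. f x + g x) h = l2inner M f h + l2inner M g h"
  unfolding l2inner_def using inner_integrable[OF assms(1,3)] inner_integrable[OF assms(2,3)]
  by (simp add: distrib_right)

lemma inner_cmult1: "l2inner M (\<lambda>x. c * f x) h = c * l2inner M f h"
  unfolding l2inner_def by (simp add: mult.assoc)

lemma inner_cmult2: "l2inner M f (\<lambda>x. c * h x) = cnj c * l2inner M f h"
  unfolding l2inner_def by (simp add: ac_simps)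

lemma inner_cnj: "l2inner M g f = cnj (l2inner M f g)"
proof -
  have "(\<lambda>x. g x * cnj (f x)) = (\<lambda>x. cnj (f x * cnj (g x)))" by (auto simp: fun_eq_iff mult.commute)
  then show ?thesis unfolding l2inner_def by (simp only: Bochner_Integration.integral_cnj)
qed

lemma inner_add2: assumes "f \<in> L2 M" "g \<in> L2 M" "h \<in> L2 M"
  shows "l2inner M h (\<lambda>x. f x + g x) = l2inner M h f + l2inner M h g"
  using inner_add1[OF assms] inner_cnj[of M h] inner_cnj[of M f h] inner_cnj[of M g h]
  by (metis complex_cnj_add)

lemma inner_diff1: assumes "f \<in> L2 M" "g \<in> L2 M" "h \<in> L2 M"
  shows "l2inner M (\<lambda>x. f x - g x) h = l2inner M f h - l2inner M g h"
  using inner_add1[OF assms(1) L2_uminus[OF assms(2)] assms(3)] inner_cmult1[of M "-1" g h] by simp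

lemma inner_diff2: assumes "f \<in> L2 M" "g \<in> L2 M" "h \<in> L2 M"
  shows "l2inner M h (\<lambda>x. f x - g x) = l2inner M h f - l2inner M h g"
  using inner_diff1[OF assms] inner_cnj[of M h] inner_cnj[of M f h] inner_cnj[of M g h]
  by (metis complex_cnj_diff)

lemma inner_sum1: assumes "\<And>i. i \<in> A \<Longrightarrow> f i \<in> L2 M" "h \<in> L2 M"
  shows "l2inner M (\<lambda>x. \<Sum>i\<in>A. f i x) h = (\<Sum>i\<in>A. l2inner M (f i) h)"
  using assms
proof (induction A rule: infinite_finite_induct)
  case (infinite A) then show ?case by (simp add: l2inner_def)
next
  case empty then show ?case by (simp add: l2inner_def)
next
  case (insert a A)
  have "l2inner M (\<lambda>x. \<Sum>i\<in>insert a A. f i x) h = l2inner M (\<lambda>x. f a x + (\<Sum>i\<in>A. f i x)) h"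
    using insert by simp
  also have "\<dots> = l2inner M (f a) h + l2inner M (\<lambda>x. \<Sum>i\<in>A. f i x) h"
    using insert by (intro inner_add1 L2_sum) auto
  finally show ?case using insert by simp
qed

lemma inner_sum2: assumes "\<And>i. i \<in> A \<Longrightarrow> f i \<in> L2 M" "h \<in> L2 M"
  shows "l2inner M h (\<lambda>x. \<Sum>i\<in>A. f i x) = (\<Sum>i\<in>A. l2inner M h (f i))"
proof -
  have "l2inner M h (\<lambda>x. \<Sum>i\<in>A. f i x) = cnj (l2inner M (\<lambda>x. \<Sum>i\<in>A. f i x) h)"
    by (rule inner_cnj)
  also have "\<dots> = (\<Sum>i\<in>A. cnj (l2inner M (f i) h))" using inner_sum1[of A f M h] assms by simp
  also have "\<dots> = (\<Sum>i\<in>A. l2inner M h (f i))" by (simp add: inner_cnj[of M h])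
  finally show ?thesis .
qed

lemma inner_self: "l2inner M f f = complex_of_real (sq2 M f)"
proof -
  have "l2inner M f f = (\<integral>x. complex_of_real ((cmod (f x))\<^sup>2) \<partial>M)"
    unfolding l2inner_def by (simp only: complex_norm_square)
  also have "\<dots> = complex_of_real (\<integral>x. (cmod (f x))\<^sup>2 \<partial>M)" by (rule integral_complex_of_real)
  finally show ?thesis unfolding sq2_def .
qed

lemma sq2_nonneg: "sq2 M f \<ge> 0"
  unfolding sq2_def by simp

lemma l2norm_sq2: "l2norm M f = sqrt (sq2 M f)"
  unfolding l2norm_def sq2_def ..

lemma inner_cong1: assumes "AE x in M. f x = g x" "f \<in> borel_measurable M" "g \<in> borel_measurable M"
   "h \<in> borel_measurable M"
  shows "l2inner M f h = l2inner M g h"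
proof -
  have [measurable]: "f \<in> borel_measurable M" "g \<in> borel_measurable M" "h \<in> borel_measurable M" using assms by auto
  show ?thesis unfolding l2inner_def using assms(1) by (intro integral_cong_AE) auto
qed

lemma sq2_cong: assumes "AE x in M. f x = g x" "f \<in> borel_measurable M" "g \<in> borel_measurable M"
  shows "sq2 M f = sq2 M g"
proof -
  have [measurable]: "f \<in> borel_measurable M" "g \<in> borel_measurable M" using assms by auto
  show ?thesis unfolding sq2_def using assms(1) by (intro integral_cong_AE) auto
qed

lemma mul_cnj: "z * cnj z = complex_of_real ((cmod z)\<^sup>2)"
  by (rule complex_norm_square[symmetric])

lemma amgm_t: fixes x y t :: real assumes "t > 0" shows "x * y \<le> (t * x\<^sup>2 + y\<^sup>2 / t) / 2"
proof -
  have "0 \<le> (t * x - y)\<^sup>2" by simp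
  hence "2 * t * (x * y) \<le> t\<^sup>2 * x\<^sup>2 + y\<^sup>2" by (simp add: power2_diff power_mult_distrib)
  moreover have "(t * x\<^sup>2 + y\<^sup>2 / t) / 2 = (t\<^sup>2 * x\<^sup>2 + y\<^sup>2) / (2 * t)"
    using assms by (simp add: field_simps power2_eq_square)
  ultimately show ?thesis using assms by (simp add: pos_le_divide_eq mult.commute mult.left_commute)
qed

lemma real_cs_aux: fixes A B c :: real
  assumes "A \<ge> 0" "B \<ge> 0" "\<And>t. t > 0 \<Longrightarrow> c \<le> (t * A + B / t) / 2"
  shows "c \<le> sqrt A * sqrt B"
proof (cases "A > 0 \<and> B > 0")
  case True
  define t where "t = sqrt B / sqrt A"
  have t: "t > 0" using True by (simp add: t_def)
  have sA: "sqrt A * sqrt A = A" "sqrt B * sqrt B = B" "sqrt A > 0" "sqrt B > 0" using True by auto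
  have "t * A = sqrt A * sqrt B" unfolding t_def
    by (subst sA(1)[symmetric]) (use sA in \<open>simp add: field_simps\<close>)
  moreover have "B / t = sqrt A * sqrt B" unfolding t_def
    by (subst sA(2)[symmetric]) (use sA in \<open>simp add: field_simps\<close>)
  ultimately show ?thesis using assms(3)[OF t] by simp
next
  case False
  show ?thesis
  proof (rule ccontr)
    assume c: "\<not> c \<le> sqrt A * sqrt B"
    have "sqrt A * sqrt B = 0" using False assms by auto
    hence cpos: "c > 0" using c by linarith
    show False
    proof (cases "A = 0")
      case True
      define t where "t = (B + 1) / c"
      have t: "t > 0" using cpos assms by (simp add: t_def)
      have "c \<le> B / t / 2" using assms(3)[OF t] True by simp
      also have "\<dots> = B * c / (2 * (B + 1))" unfolding t_def using cpos assms by (simp add: field_simps)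
      also have "\<dots> < c"
      proof -
        have "0 \<le> B * c" using cpos assms by simp
        thus ?thesis using cpos assms by (simp add: field_simps add_nonneg_pos)
      qed
      finally show False by simp
    next
      case False
      hence B0: "B = 0" using \<open>\<not> (A > 0 \<and> B > 0)\<close> assms by auto
      define t where "t = c / (A + 1)"
      have t: "t > 0" using cpos assms by (simp add: t_def)
      have "c \<le> t * A / 2" using assms(3)[OF t] B0 by simp
      also have "\<dots> = A * c / (2 * (A + 1))" unfolding t_def using cpos assms by (simp add: field_simps)
      also have "\<dots> < c"
      proof -
        have "0 \<le> A * c" using cpos assms by simp
        thus ?thesis using cpos assms by (simp add: field_simps add_nonneg_pos)
      qed
      finally show False by simp
    qed
  qed
qed

lemma CS: assumes "f \<in> L2 M" "g \<in> L2 M"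
  shows "cmod (l2inner M f g) \<le> sqrt (sq2 M f) * sqrt (sq2 M g)"
proof (rule real_cs_aux[OF sq2_nonneg sq2_nonneg])
  fix t :: real assume t: "t > 0"
  have [measurable]: "f \<in> borel_measurable M" "g \<in> borel_measurable M" using assms by (auto dest: L2_D)
  have i1: "integrable M (\<lambda>x. (cmod (f x))\<^sup>2)" "integrable M (\<lambda>x. (cmod (g x))\<^sup>2)" using assms by (auto dest: L2_D)
  have "cmod (l2inner M f g) \<le> (\<integral>x. cmod (f x * cnj (g x)) \<partial>M)"
    unfolding l2inner_def by (rule integral_norm_bound)
  also have "\<dots> \<le> (\<integral>x. (t * (cmod (f x))\<^sup>2 + (cmod (g x))\<^sup>2 / t) / 2 \<partial>M)"
  proof (rule integral_mono)
    show "integrable M (\<lambda>x. cmod (f x * cnj (g x)))" using inner_integrable[OF assms] by auto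
    show "integrable M (\<lambda>x. (t * (cmod (f x))\<^sup>2 + (cmod (g x))\<^sup>2 / t) / 2)" using i1 by auto
    fix x show "cmod (f x * cnj (g x)) \<le> (t * (cmod (f x))\<^sup>2 + (cmod (g x))\<^sup>2 / t) / 2"
      using amgm_t[OF t, of "cmod (f x)" "cmod (g x)"] by (simp add: norm_mult)
  qed
  also have "\<dots> = (t * sq2 M f + sq2 M g / t) / 2"
    unfolding sq2_def using i1 by simp
  finally show "cmod (l2inner M f g) \<le> (t * sq2 M f + sq2 M g / t) / 2" .
qed

lemma sq2_zero_iff: assumes "f \<in> L2 M" shows "sq2 M f = 0 \<longleftrightarrow> (AE x in M. f x = 0)"
proof -
  have "sq2 M f = 0 \<longleftrightarrow> (AE x in M. (cmod (f x))\<^sup>2 = 0)"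
    unfolding sq2_def using assms by (intro integral_nonneg_eq_0_iff_AE) (auto dest: L2_D)
  then show ?thesis by simp
qed

lemma ONB_D: assumes "orthonormal_basis M \<psi>"
  shows "\<psi> i \<in> L2 M" "l2inner M (\<psi> i) (\<psi> j) = (if i = j then 1 else 0)"
    "f \<in> L2 M \<Longrightarrow> (\<And>i. l2inner M f (\<psi> i) = 0) \<Longrightarrow> AE x in M. f x = 0"
  using assms unfolding orthonormal_basis_def by auto

lemma ON_inner_comb: assumes "orthonormal_basis M \<psi>" "finite A"
  shows "l2inner M (\<lambda>x. \<Sum>i\<in>A. c i * \<psi> i x) (\<psi> j) = (if j \<in> A then c j else 0)"
proof -
  have "l2inner M (\<lambda>x. \<Sum>i\<in>A. c i * \<psi> i x) (\<psi> j) = (\<Sum>i\<in>A. l2inner M (\<lambda>x. c i * \<psi> i x) (\<psi> j))"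
    using ONB_D[OF assms(1)] by (intro inner_sum1 L2_cmult) auto
  also have "\<dots> = (\<Sum>i\<in>A. c i * (if i = j then 1 else 0))"
    by (simp add: inner_cmult1 ONB_D[OF assms(1)])
  also have "\<dots> = (if j \<in> A then c j else 0)"
    using assms(2) by (simp add: if_distrib sum.delta' cong: if_cong)
  finally show ?thesis .
qed

lemma ON_sq2_comb: assumes "orthonormal_basis M \<psi>" "finite A"
  shows "sq2 M (\<lambda>x. \<Sum>i\<in>A. c i * \<psi> i x) = (\<Sum>i\<in>A. (cmod (c i))\<^sup>2)"
proof -
  let ?S = "\<lambda>x. \<Sum>i\<in>A. c i * \<psi> i x"
  have S: "?S \<in> L2 M" using ONB_D[OF assms(1)] by (intro L2_lincomb) auto
  have "complex_of_real (sq2 M ?S) = l2inner M ?S ?S" by (simp add: inner_self)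
  also have "\<dots> = (\<Sum>i\<in>A. l2inner M (\<lambda>x. c i * \<psi> i x) ?S)"
    using ONB_D[OF assms(1)] S by (intro inner_sum1 L2_cmult) auto
  also have "\<dots> = (\<Sum>i\<in>A. c i * cnj (l2inner M ?S (\<psi> i)))"
  proof (rule sum.cong)
    fix i show "l2inner M (\<lambda>x. c i * \<psi> i x) ?S = c i * cnj (l2inner M ?S (\<psi> i))"
      by (simp only: inner_cmult1 inner_cnj[of M "\<psi> i" ?S])
  qed simp
  also have "\<dots> = (\<Sum>i\<in>A. complex_of_real ((cmod (c i))\<^sup>2))"
    using ON_inner_comb[OF assms, of c] by (intro sum.cong) (auto simp: mul_cnj simp del: of_real_power)
  also have "\<dots> = complex_of_real (\<Sum>i\<in>A. (cmod (c i))\<^sup>2)" by simp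
  finally show ?thesis by (simp only: of_real_eq_iff)
qed

lemma bessel_eq: assumes "orthonormal_basis M \<psi>" "finite A" "f \<in> L2 M"
  shows "sq2 M (\<lambda>x. f x - (\<Sum>i\<in>A. l2inner M f (\<psi> i) * \<psi> i x)) = sq2 M f - (\<Sum>i\<in>A. (cmod (l2inner M f (\<psi> i)))\<^sup>2)"
proof -
  define c where "c i = l2inner M f (\<psi> i)" for i
  let ?P = "\<lambda>x. \<Sum>i\<in>A. c i * \<psi> i x"
  define s where "s = (\<Sum>i\<in>A. (cmod (c i))\<^sup>2)"
  have P: "?P \<in> L2 M" using ONB_D[OF assms(1)] by (intro L2_lincomb) auto
  have D: "(\<lambda>x. f x - ?P x) \<in> L2 M" by (rule L2_diff[OF assms(3) P])
  have "sq2 M ?P = s" unfolding s_def by (rule ON_sq2_comb[OF assms(1,2)])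
  hence PP: "l2inner M ?P ?P = complex_of_real s"
    by (simp add: inner_self)
  have Pf: "l2inner M ?P f = complex_of_real s"
  proof -
    have "l2inner M ?P f = (\<Sum>i\<in>A. l2inner M (\<lambda>x. c i * \<psi> i x) f)"
      using ONB_D[OF assms(1)] assms(3) by (intro inner_sum1 L2_cmult) auto
    also have "\<dots> = (\<Sum>i\<in>A. c i * cnj (c i))"
    proof (rule sum.cong)
      fix i show "l2inner M (\<lambda>x. c i * \<psi> i x) f = c i * cnj (c i)"
        unfolding c_def by (simp only: inner_cmult1 inner_cnj[of M "\<psi> i" f])
    qed simp
    also have "\<dots> = complex_of_real s" unfolding s_def by (simp add: mul_cnj del: of_real_power)
    finally show ?thesis .
  qed
  have fP: "l2inner M f ?P = complex_of_real s"
    using Pf inner_cnj[of M f ?P] by simp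
  have "complex_of_real (sq2 M (\<lambda>x. f x - ?P x)) = l2inner M (\<lambda>x. f x - ?P x) (\<lambda>x. f x - ?P x)"
    by (simp add: inner_self)
  also have "\<dots> = l2inner M f (\<lambda>x. f x - ?P x) - l2inner M ?P (\<lambda>x. f x - ?P x)"
    by (rule inner_diff1[OF assms(3) P D])
  also have "\<dots> = (l2inner M f f - l2inner M f ?P) - (l2inner M ?P f - l2inner M ?P ?P)"
    by (simp only: inner_diff2[OF assms(3) P assms(3)] inner_diff2[OF assms(3) P P])
  also have "\<dots> = complex_of_real (sq2 M f - s)"
    by (simp only: PP Pf fP inner_self[of M f]) simp
  finally show ?thesis unfolding s_def c_def by (simp only: of_real_eq_iff)
qed

lemma bessel: assumes "orthonormal_basis M \<psi>" "finite A" "f \<in> L2 M"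
  shows "(\<Sum>i\<in>A. (cmod (l2inner M f (\<psi> i)))\<^sup>2) \<le> sq2 M f"
  using bessel_eq[OF assms] sq2_nonneg[of M "\<lambda>x. f x - (\<Sum>i\<in>A. l2inner M f (\<psi> i) * \<psi> i x)"] by linarith

lemma sq2_nn: assumes "f \<in> L2 M"
  shows "(\<integral>\<^sup>+x. ennreal ((cmod (f x))\<^sup>2) \<partial>M) = ennreal (sq2 M f)"
  unfolding sq2_def using assms by (intro nn_integral_eq_integral) (auto dest: L2_D)

lemma L2_of_nn: assumes [measurable]: "f \<in> borel_measurable M"
  and fin: "(\<integral>\<^sup>+x. ennreal ((cmod (f x))\<^sup>2) \<partial>M) < \<infinity>"
  shows "f \<in> L2 M"
proof (rule L2_I)
  show "f \<in> borel_measurable M" by simp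
  show "integrable M (\<lambda>x. (cmod (f x))\<^sup>2)"
    by (rule integrableI_bounded) (use fin in auto)
qed

lemma sq2_psi: assumes "orthonormal_basis M \<psi>" shows "sq2 M (\<psi> j) = 1"
proof -
  have "complex_of_real (sq2 M (\<psi> j)) = 1" using ONB_D(2)[OF assms, of j j] by (simp add: inner_self)
  thus ?thesis by (simp only: of_real_eq_1_iff)
qed

lemma sum_split_lt: "(n::nat) \<le> m \<Longrightarrow> (\<Sum>j<m. f j) - (\<Sum>j<n. f j) = (\<Sum>j\<in>{n..<m}. (f j :: complex))"
  by (metis add_diff_cancel_left' atLeast0LessThan sum.atLeastLessThan_concat zero_le)

lemma amgm_cmod: "cmod d \<le> ((1/2)^k + 2^k * (cmod d)\<^sup>2) / 2"
  using amgm_t[of "2^k" "cmod d" 1] by (simp add: power_one_over algebra_simps)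

lemma RF:
  assumes ONB: "orthonormal_basis M \<psi>" and sm: "summable (\<lambda>j. (cmod (a j))\<^sup>2)"
  shows "\<exists>h \<in> L2 M. (\<forall>j. l2inner M h (\<psi> j) = a j) \<and>
           (\<forall>e>0. \<forall>n0. \<exists>n\<ge>n0. sq2 M (\<lambda>x. h x - (\<Sum>j<n. a j * \<psi> j x)) < e)"
proof -
  define S where "S n x = (\<Sum>j<n. a j * \<psi> j x)" for n x
  have SL2: "S n \<in> L2 M" for n unfolding S_def using ONB_D(1)[OF ONB] by (intro L2_lincomb) auto
  have Smeas[measurable]: "S n \<in> borel_measurable M" for n using SL2 by (rule L2_D)
  have Sdiff: "sq2 M (\<lambda>x. S m x - S n x) = (\<Sum>j\<in>{n..<m}. (cmod (a j))\<^sup>2)" if "n \<le> m" for n m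
  proof -
    have "(\<lambda>x. S m x - S n x) = (\<lambda>x. \<Sum>j\<in>{n..<m}. a j * \<psi> j x)"
      unfolding S_def by (intro ext) (rule sum_split_lt[OF that])
    thus ?thesis using ON_sq2_comb[OF ONB, of "{n..<m}" a] by simp
  qed
  have Nex: "\<forall>k. \<exists>N. \<forall>m\<ge>N. \<forall>n. norm (\<Sum>j\<in>{m..<n}. (cmod (a j))\<^sup>2) < (1/4::real)^k"
    using sm unfolding summable_Cauchy by auto
  obtain N where N0: "\<forall>k. \<forall>m\<ge>N k. \<forall>n. norm (\<Sum>j\<in>{m..<n}. (cmod (a j))\<^sup>2) < (1/4::real)^k"
    using choice[OF Nex] by blast
  have N: "(\<Sum>j\<in>{m..<n}. (cmod (a j))\<^sup>2) < (1/4::real)^k" if "m \<ge> N k" for k m n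
  proof -
    have "norm (\<Sum>j\<in>{m..<n}. (cmod (a j))\<^sup>2) < (1/4::real)^k" using N0 that by blast
    moreover have "norm (\<Sum>j\<in>{m..<n}. (cmod (a j))\<^sup>2) = (\<Sum>j\<in>{m..<n}. (cmod (a j))\<^sup>2)"
      by (simp add: sum_nonneg)
    ultimately show ?thesis by simp
  qed
  define nk where "nk k = k + (\<Sum>i\<le>k. N i)" for k
  have nk_mono: "strict_mono nk" unfolding strict_mono_Suc_iff nk_def by simp
  have nk_N: "nk k \<ge> N k" for k unfolding nk_def
    by (metis atMost_iff finite_atMost le_add2 le_refl member_le_sum order_trans zero_le)
  have nk_k: "nk k \<ge> k" for k unfolding nk_def by simp
  have Sk: "sq2 M (\<lambda>x. S (nk m) x - S (nk k) x) < (1/4)^k" if "k \<le> m" for k m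
  proof -
    have "nk k \<le> nk m" using nk_mono that by (simp add: strict_mono_less_eq)
    thus ?thesis using Sdiff N[OF nk_N] by simp
  qed
  define D where "D k x = S (nk (Suc k)) x - S (nk k) x" for k x
  have DL2: "D k \<in> L2 M" for k unfolding D_def by (intro L2_diff SL2)
  have Dmeas[measurable]: "D k \<in> borel_measurable M" for k unfolding D_def by measurable
  have Dsq: "sq2 M (D k) < (1/4)^k" for k unfolding D_def using Sk[of k "Suc k"] by simp
  define G where "G x = (\<Sum>k. ennreal (2^k * (cmod (D k x))\<^sup>2))" for x
  have Gmeas[measurable]: "G \<in> borel_measurable M" unfolding G_def by measurable
  have intG: "(\<integral>\<^sup>+x. G x \<partial>M) = (\<Sum>k. (\<integral>\<^sup>+x. ennreal (2^k * (cmod (D k x))\<^sup>2) \<partial>M))"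
    unfolding G_def by (rule nn_integral_suminf) measurable
  have termk: "(\<integral>\<^sup>+x. ennreal (2^k * (cmod (D k x))\<^sup>2) \<partial>M) \<le> ennreal ((1/2)^k)" for k
  proof -
    have "(\<integral>\<^sup>+x. ennreal (2^k * (cmod (D k x))\<^sup>2) \<partial>M) = (\<integral>\<^sup>+x. ennreal (2^k) * ennreal ((cmod (D k x))\<^sup>2) \<partial>M)"
      by (simp add: ennreal_mult)
    also have "\<dots> = ennreal (2^k) * (\<integral>\<^sup>+x. ennreal ((cmod (D k x))\<^sup>2) \<partial>M)"
      by (rule nn_integral_cmult) measurable
    also have "\<dots> = ennreal (2^k * sq2 M (D k))"
      using sq2_nn[OF DL2] by (simp add: ennreal_mult sq2_nonneg)
    also have "\<dots> \<le> ennreal ((1/2)^k)"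
    proof (rule ennreal_leI)
      have "2^k * sq2 M (D k) \<le> 2^k * (1/4)^k" using Dsq[of k] by (intro mult_left_mono) auto
      also have "\<dots> = (2 * (1/4))^k" by (rule power_mult_distrib[symmetric])
      also have "\<dots> = (1/2)^k" by simp
      finally show "2^k * sq2 M (D k) \<le> (1/2)^k" .
    qed
    finally show ?thesis .
  qed
  have "(\<integral>\<^sup>+x. G x \<partial>M) \<le> (\<Sum>k. ennreal ((1/2)^k))"
    unfolding intG by (intro suminf_le termk summableI)
  also have "\<dots> = ennreal (\<Sum>k. (1/2)^k)"
    by (rule suminf_ennreal2) (auto simp: summable_geometric)
  finally have "(\<integral>\<^sup>+x. G x \<partial>M) < \<infinity>" by (simp add: le_less_trans)
  hence AEG: "AE x in M. G x < \<infinity>"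
    by (intro finite_nn_integral_imp_ae_finite) auto
  have conv: "convergent (\<lambda>k. S (nk k) x)" if Gx: "G x < \<infinity>" for x
  proof -
    have sm1: "summable (\<lambda>k. 2^k * (cmod (D k x))\<^sup>2)"
      using Gx unfolding G_def by (intro summable_suminf_not_top) auto
    have sm2: "summable (\<lambda>k. ((1/2)^k + 2^k * (cmod (D k x))\<^sup>2) / 2)"
      by (intro summable_divide summable_add summable_geometric sm1) simp
    have "summable (\<lambda>k. D k x)"
      by (rule summable_comparison_test'[OF sm2, of 0]) (rule amgm_cmod)
    hence "(\<lambda>k. \<Sum>i<k. D i x) \<longlonglongrightarrow> (\<Sum>i. D i x)" by (rule summable_LIMSEQ)
    hence "(\<lambda>k. S (nk 0) x + (\<Sum>i<k. D i x)) \<longlonglongrightarrow> S (nk 0) x + (\<Sum>i. D i x)"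
      by (intro tendsto_intros)
    moreover have "S (nk 0) x + (\<Sum>i<k. D i x) = S (nk k) x" for k
      unfolding D_def by (subst sum_lessThan_telescope[where f="\<lambda>i. S (nk i) x"]) simp
    ultimately show ?thesis unfolding convergent_def by auto
  qed
  define h where "h x = lim (\<lambda>k. S (nk k) x)" for x
  have hmeas[measurable]: "h \<in> borel_measurable M" unfolding h_def by measurable
  have AEconv: "AE x in M. (\<lambda>k. S (nk k) x) \<longlonglongrightarrow> h x"
    using AEG by eventually_elim (use conv in \<open>auto simp: h_def convergent_LIMSEQ_iff\<close>)
  have hk_nn: "(\<integral>\<^sup>+x. ennreal ((cmod (h x - S (nk k) x))\<^sup>2) \<partial>M) \<le> ennreal ((1/4)^k)" for k
  proof -
    have "(\<integral>\<^sup>+x. ennreal ((cmod (h x - S (nk k) x))\<^sup>2) \<partial>M) =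
          (\<integral>\<^sup>+x. liminf (\<lambda>m. ennreal ((cmod (S (nk m) x - S (nk k) x))\<^sup>2)) \<partial>M)"
    proof (rule nn_integral_cong_AE)
      show "AE x in M. ennreal ((cmod (h x - S (nk k) x))\<^sup>2) = liminf (\<lambda>m. ennreal ((cmod (S (nk m) x - S (nk k) x))\<^sup>2))"
        using AEconv
      proof eventually_elim
        case (elim x)
        have "(\<lambda>m. ennreal ((cmod (S (nk m) x - S (nk k) x))\<^sup>2)) \<longlonglongrightarrow> ennreal ((cmod (h x - S (nk k) x))\<^sup>2)"
          by (intro tendsto_intros elim)
        from lim_imp_Liminf[of sequentially, OF _ this] show ?case by simp
      qed
    qed
    also have "\<dots> \<le> liminf (\<lambda>m. (\<integral>\<^sup>+x. ennreal ((cmod (S (nk m) x - S (nk k) x))\<^sup>2) \<partial>M))"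
      by (rule nn_integral_liminf) measurable
    also have "\<dots> \<le> limsup (\<lambda>m. (\<integral>\<^sup>+x. ennreal ((cmod (S (nk m) x - S (nk k) x))\<^sup>2) \<partial>M))"
      by (rule Liminf_le_Limsup) simp
    also have "\<dots> \<le> ennreal ((1/4)^k)"
    proof (rule Limsup_bounded)
      show "\<forall>\<^sub>F m in sequentially. (\<integral>\<^sup>+x. ennreal ((cmod (S (nk m) x - S (nk k) x))\<^sup>2) \<partial>M) \<le> ennreal ((1/4)^k)"
        using eventually_ge_at_top[of k]
      proof eventually_elim
        case (elim m)
        have "(\<integral>\<^sup>+x. ennreal ((cmod (S (nk m) x - S (nk k) x))\<^sup>2) \<partial>M) = ennreal (sq2 M (\<lambda>x. S (nk m) x - S (nk k) x))"
          by (rule sq2_nn) (intro L2_diff SL2)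
        also have "\<dots> \<le> ennreal ((1/4)^k)" using Sk[OF elim] by (intro ennreal_leI) simp
        finally show ?case .
      qed
    qed
    finally show ?thesis .
  qed
  have hSL2: "(\<lambda>x. h x - S (nk k) x) \<in> L2 M" for k
    by (rule L2_of_nn) (use hk_nn[of k] in \<open>auto simp: le_less_trans\<close>)
  have hS: "sq2 M (\<lambda>x. h x - S (nk k) x) \<le> (1/4)^k" for k
    using hk_nn[of k] sq2_nn[OF hSL2[of k]] by (simp add: ennreal_le_iff)
  have hL2: "h \<in> L2 M"
  proof -
    have "(\<lambda>x. (h x - S (nk 0) x) + S (nk 0) x) \<in> L2 M" by (intro L2_add hSL2 SL2)
    thus ?thesis by simp
  qed
  have coef: "l2inner M h (\<psi> j) = a j" for j
  proof -
    have bnd: "cmod (l2inner M h (\<psi> j) - a j) \<le> (1/2)^k" if "k \<ge> Suc j" for k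
    proof -
      have "j < nk k" using nk_k[of k] that by simp
      hence "l2inner M (S (nk k)) (\<psi> j) = a j"
        unfolding S_def using ON_inner_comb[OF ONB, of "{..<nk k}" a j] by (simp add: S_def)
      hence "l2inner M h (\<psi> j) - a j = l2inner M (\<lambda>x. h x - S (nk k) x) (\<psi> j)"
        using inner_diff1[OF hL2 SL2 ONB_D(1)[OF ONB]] by simp
      also have "cmod \<dots> \<le> sqrt (sq2 M (\<lambda>x. h x - S (nk k) x)) * sqrt (sq2 M (\<psi> j))"
        by (rule CS[OF hSL2 ONB_D(1)[OF ONB]])
      also have "\<dots> \<le> sqrt ((1/4)^k)" using hS[of k] by (simp add: sq2_psi[OF ONB])
      also have "\<dots> = (sqrt (1/4))^k" by (rule real_sqrt_power)
      also have "sqrt (1/4) = (1/2::real)" by (rule real_sqrt_unique) (simp_all add: power2_eq_square)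
      finally show ?thesis by simp
    qed
    show ?thesis
    proof (rule ccontr)
      assume "l2inner M h (\<psi> j) \<noteq> a j"
      hence pos: "cmod (l2inner M h (\<psi> j) - a j) > 0" by simp
      obtain k where k: "(1/2::real)^k < cmod (l2inner M h (\<psi> j) - a j)"
        using real_arch_pow_inv[OF pos, of "1/2"] by auto
      have "(1/2::real)^(max k (Suc j)) \<le> (1/2)^k" by (intro power_decreasing) auto
      with bnd[of "max k (Suc j)"] k show False by simp
    qed
  qed
  have approx: "\<exists>n\<ge>n0. sq2 M (\<lambda>x. h x - (\<Sum>j<n. a j * \<psi> j x)) < e" if epos: "e > 0" for e n0
  proof -
    obtain k where k: "(1/4::real)^k < e" using real_arch_pow_inv[OF epos, of "1/4"] by auto
    let ?k = "max k n0"
    have "sq2 M (\<lambda>x. h x - S (nk ?k) x) \<le> (1/4)^?k" by (rule hS)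
    also have "\<dots> \<le> (1/4)^k" by (intro power_decreasing) auto
    finally have "sq2 M (\<lambda>x. h x - S (nk ?k) x) < e" using k by simp
    moreover have "nk ?k \<ge> n0" using nk_k[of ?k] by simp
    ultimately show ?thesis unfolding S_def by blast
  qed
  show ?thesis using hL2 coef approx by blast
qed

lemma projN_L2: assumes "orthonormal_basis M \<psi>" shows "projN M \<psi> n g \<in> L2 M"
  unfolding projN_def using ONB_D(1)[OF assms] by (intro L2_lincomb) auto

lemma bessel_summable: assumes "orthonormal_basis M \<psi>" "g \<in> L2 M"
  shows "summable (\<lambda>j. (cmod (l2inner M g (\<psi> j)))\<^sup>2)"
  by (rule summableI_nonneg_bounded[where x="sq2 M g"]) (auto intro: bessel[OF assms(1) _ assms(2)])

lemma dense: assumes ONB: "orthonormal_basis M \<psi>" and g: "g \<in> L2 M" and e: "e > 0"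
  shows "\<exists>n\<ge>n0. sq2 M (\<lambda>x. g x - projN M \<psi> n g x) < e"
proof -
  define b where "b j = l2inner M g (\<psi> j)" for j
  obtain h where h: "h \<in> L2 M" "\<And>j. l2inner M h (\<psi> j) = b j"
    and ap: "\<forall>e>0. \<forall>n0. \<exists>n\<ge>n0. sq2 M (\<lambda>x. h x - (\<Sum>j<n. b j * \<psi> j x)) < e"
    using RF[OF ONB bessel_summable[OF ONB g]] unfolding b_def by blast
  have gh: "(\<lambda>x. g x - h x) \<in> L2 M" using g h(1) by (rule L2_diff)
  have "AE x in M. g x - h x = 0"
  proof (rule ONB_D(3)[OF ONB gh])
    fix i show "l2inner M (\<lambda>x. g x - h x) (\<psi> i) = 0"
      using inner_diff1[OF g h(1) ONB_D(1)[OF ONB]] h(2) by (simp add: b_def)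
  qed
  hence AE: "AE x in M. g x = h x" by simp
  obtain n where n: "n \<ge> n0" "sq2 M (\<lambda>x. h x - (\<Sum>j<n. b j * \<psi> j x)) < e" using ap e by blast
  have [measurable]: "g \<in> borel_measurable M" "h \<in> borel_measurable M"
    "projN M \<psi> n g \<in> borel_measurable M"
    using g h(1) projN_L2[OF ONB] by (auto dest: L2_D)
  have "sq2 M (\<lambda>x. g x - projN M \<psi> n g x) = sq2 M (\<lambda>x. h x - (\<Sum>j<n. b j * \<psi> j x))"
  proof (rule sq2_cong)
    show "AE x in M. g x - projN M \<psi> n g x = h x - (\<Sum>j<n. b j * \<psi> j x)"
      using AE by eventually_elim (simp add: projN_def b_def)
    show "(\<lambda>x. g x - projN M \<psi> n g x) \<in> borel_measurable M" by measurable
    show "(\<lambda>x. h x - (\<Sum>j<n. b j * \<psi> j x)) \<in> borel_measurable M"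
      using L2_D(1)[OF L2_diff[OF h(1) projN_L2[OF ONB, of n g]]] AE
      unfolding projN_def b_def by simp
  qed
  thus ?thesis using n by auto
qed

lemma inner_projN2: assumes ONB: "orthonormal_basis M \<psi>" and u: "u \<in> L2 M"
  shows "l2inner M u (projN M \<psi> n g) = (\<Sum>j<n. cnj (l2inner M g (\<psi> j)) * l2inner M u (\<psi> j))"
proof -
  have "l2inner M u (projN M \<psi> n g) = (\<Sum>j<n. l2inner M u (\<lambda>x. l2inner M g (\<psi> j) * \<psi> j x))"
    unfolding projN_def using ONB_D(1)[OF ONB] u by (intro inner_sum2 L2_cmult) auto
  also have "\<dots> = (\<Sum>j<n. cnj (l2inner M g (\<psi> j)) * l2inner M u (\<psi> j))"
    by (simp add: inner_cmult2)
  finally show ?thesis .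
qed

lemma WC: assumes ONB: "orthonormal_basis M \<psi>"
  and u: "\<And>i. u i \<in> L2 M" and ub: "\<And>i. sq2 M (u i) \<le> 1" and f: "f \<in> L2 M"
  and lim: "\<And>j. (\<lambda>i. l2inner M (u i) (\<psi> j)) \<longlonglongrightarrow> l2inner M f (\<psi> j)"
  shows "weak_conv M u f"
  unfolding weak_conv_def
proof
  fix g assume g: "g \<in> L2 M"
  show "(\<lambda>i. l2inner M (u i) g) \<longlonglongrightarrow> l2inner M f g"
  proof (rule LIMSEQ_I)
    fix r :: real assume r: "r > 0"
    define F where "F = sqrt (sq2 M f)"
    have F0: "F \<ge> 0" unfolding F_def by (simp add: sq2_nonneg)
    define \<delta> where "\<delta> = r / (2 * (1 + F))"
    have \<delta>: "\<delta> > 0" unfolding \<delta>_def using r F0 by simp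
    have \<delta>F: "\<delta> * (1 + F) = r / 2" unfolding \<delta>_def using F0 by (simp add: field_simps)
    obtain n where n: "sq2 M (\<lambda>x. g x - projN M \<psi> n g x) < \<delta>\<^sup>2"
      using dense[OF ONB g, of "\<delta>\<^sup>2" 0] \<delta> by auto
    define P where "P = projN M \<psi> n g"
    have P: "P \<in> L2 M" unfolding P_def by (rule projN_L2[OF ONB])
    have gP: "(\<lambda>x. g x - P x) \<in> L2 M" using g P by (rule L2_diff)
    have t: "sqrt (sq2 M (\<lambda>x. g x - P x)) < \<delta>"
      using real_sqrt_less_mono[OF n] \<delta> unfolding P_def by simp
    have conv: "(\<lambda>i. l2inner M (u i) P) \<longlonglongrightarrow> l2inner M f P"
      unfolding P_def inner_projN2[OF ONB u] inner_projN2[OF ONB f]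
      by (intro tendsto_intros lim)
    obtain no where no: "\<And>i. i \<ge> no \<Longrightarrow> cmod (l2inner M (u i) P - l2inner M f P) < r / 2"
      using LIMSEQ_D[OF conv, of "r/2"] r by auto
    show "\<exists>no. \<forall>i\<ge>no. norm (l2inner M (u i) g - l2inner M f g) < r"
    proof (intro exI allI impI)
      fix i assume i: "i \<ge> no"
      have eq: "l2inner M (u i) g - l2inner M f g =
          l2inner M (u i) (\<lambda>x. g x - P x) + (l2inner M (u i) P - l2inner M f P) - l2inner M f (\<lambda>x. g x - P x)"
        using inner_diff2[OF g P u[of i]] inner_diff2[OF g P f] by simp
      have a1: "cmod (l2inner M (u i) (\<lambda>x. g x - P x)) \<le> \<delta>"
      proof -
        have "cmod (l2inner M (u i) (\<lambda>x. g x - P x)) \<le> sqrt (sq2 M (u i)) * sqrt (sq2 M (\<lambda>x. g x - P x))"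
          by (rule CS[OF u gP])
        also have "\<dots> \<le> 1 * \<delta>"
          using t ub[of i] by (intro mult_mono) (auto simp: sq2_nonneg)
        finally show ?thesis by simp
      qed
      have a3: "cmod (l2inner M f (\<lambda>x. g x - P x)) \<le> F * \<delta>"
      proof -
        have "cmod (l2inner M f (\<lambda>x. g x - P x)) \<le> sqrt (sq2 M f) * sqrt (sq2 M (\<lambda>x. g x - P x))"
          by (rule CS[OF f gP])
        also have "\<dots> \<le> F * \<delta>"
          unfolding F_def using t F0 unfolding F_def by (intro mult_left_mono) auto
        finally show ?thesis .
      qed
      have "norm (l2inner M (u i) g - l2inner M f g) \<le>
          cmod (l2inner M (u i) (\<lambda>x. g x - P x)) + cmod (l2inner M (u i) P - l2inner M f P) + cmod (l2inner M f (\<lambda>x. g x - P x))"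
        unfolding eq using norm_triangle_ineq4[of "l2inner M (u i) (\<lambda>x. g x - P x) + (l2inner M (u i) P - l2inner M f P)" "l2inner M f (\<lambda>x. g x - P x)"]
          norm_triangle_ineq[of "l2inner M (u i) (\<lambda>x. g x - P x)" "l2inner M (u i) P - l2inner M f P"] by simp
      also have "\<dots> < \<delta> + r / 2 + F * \<delta>" using a1 a3 no[OF i] by linarith
      also have "\<dots> = r" using \<delta>F by (simp add: algebra_simps)
      finally show "norm (l2inner M (u i) g - l2inner M f g) < r" .
    qed
  qed
qed

lemma koopman_D: assumes "koopman_bounded M T"
  shows "\<And>f. f \<in> L2 M \<Longrightarrow> (\<lambda>x. f (T x)) \<in> L2 M"
    "\<And>f g. f \<in> L2 M \<Longrightarrow> g \<in> L2 M \<Longrightarrow> (AE x in M. f x = g x) \<Longrightarrow> (AE x in M. f (T x) = g (T x))"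
    "\<exists>C. \<forall>f\<in>L2 M. sqrt (sq2 M (\<lambda>x. f (T x))) \<le> C * sqrt (sq2 M f)"
  using assms unfolding koopman_bounded_def l2norm_sq2 by (auto simp: o_def)

lemma sq_le_aux: fixes s C :: real assumes "0 \<le> s" "s \<le> C * sqrt s" shows "s \<le> C\<^sup>2"
proof (cases "s = 0")
  case True thus ?thesis by simp
next
  case False
  hence sp: "sqrt s > 0" using assms by simp
  have "sqrt s * sqrt s \<le> C * sqrt s" using assms by simp
  hence "sqrt s \<le> C" using sp by (rule mult_right_le_imp_le)
  hence "(sqrt s)\<^sup>2 \<le> C\<^sup>2" using sp by (intro power_mono) auto
  thus ?thesis using assms by simp
qed

lemma riesz: assumes ONB: "orthonormal_basis M \<psi>" and K: "koopman_bounded M T"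
  shows "\<exists>k \<in> L2 M. \<forall>u \<in> L2 M. l2inner M (\<lambda>x. u (T x)) (\<psi> j) = l2inner M u k"
proof -
  note KL2 = koopman_D(1)[OF K]
  obtain C where C: "\<And>f. f \<in> L2 M \<Longrightarrow> sqrt (sq2 M (\<lambda>x. f (T x))) \<le> C * sqrt (sq2 M f)"
    using koopman_D(3)[OF K] by blast
  have psi: "\<psi> m \<in> L2 M" for m using ONB_D(1)[OF ONB] .
  have psiT: "(\<lambda>x. \<psi> m (T x)) \<in> L2 M" for m using KL2[OF psi] .
  define \<beta> where "\<beta> m = l2inner M (\<lambda>x. \<psi> m (T x)) (\<psi> j)" for m
  have lin: "l2inner M (\<lambda>x. \<Sum>m<n. c m * \<psi> m (T x)) (\<psi> j) = (\<Sum>m<n. c m * \<beta> m)" for n c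
  proof -
    have "l2inner M (\<lambda>x. \<Sum>m<n. c m * \<psi> m (T x)) (\<psi> j) = (\<Sum>m<n. l2inner M (\<lambda>x. c m * \<psi> m (T x)) (\<psi> j))"
      using psiT psi by (intro inner_sum1 L2_cmult) auto
    thus ?thesis by (simp add: inner_cmult1 \<beta>_def)
  qed
  have bnd: "(\<Sum>m<n. (cmod (\<beta> m))\<^sup>2) \<le> C\<^sup>2" for n
  proof -
    define s where "s = (\<Sum>m<n. (cmod (\<beta> m))\<^sup>2)"
    define u where "u x = (\<Sum>m<n. cnj (\<beta> m) * \<psi> m x)" for x
    have uL2: "u \<in> L2 M" unfolding u_def using psi by (intro L2_lincomb) auto
    have su: "sq2 M u = s" unfolding u_def s_def using ON_sq2_comb[OF ONB, of "{..<n}" "\<lambda>m. cnj (\<beta> m)"] by simp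
    have "l2inner M (\<lambda>x. u (T x)) (\<psi> j) = (\<Sum>m<n. cnj (\<beta> m) * \<beta> m)" unfolding u_def by (rule lin)
    also have "\<dots> = complex_of_real s" unfolding s_def
      by (simp add: mult.commute[of "cnj _"] mul_cnj del: of_real_power)
    finally have eq: "l2inner M (\<lambda>x. u (T x)) (\<psi> j) = complex_of_real s" .
    have s0: "s \<ge> 0" unfolding s_def by (simp add: sum_nonneg)
    have "s = cmod (l2inner M (\<lambda>x. u (T x)) (\<psi> j))" using eq s0 by simp
    also have "\<dots> \<le> sqrt (sq2 M (\<lambda>x. u (T x))) * sqrt (sq2 M (\<psi> j))" by (rule CS[OF KL2[OF uL2] psi])
    also have "\<dots> \<le> C * sqrt s" using C[OF uL2] su by (simp add: sq2_psi[OF ONB])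
    finally show ?thesis using sq_le_aux s0 unfolding s_def by blast
  qed
  have sm: "summable (\<lambda>m. (cmod (cnj (\<beta> m)))\<^sup>2)"
    by (rule summableI_nonneg_bounded[where x="C\<^sup>2"]) (use bnd in auto)
  obtain k where k: "k \<in> L2 M" "\<And>m. l2inner M k (\<psi> m) = cnj (\<beta> m)"
    using RF[OF ONB sm] by blast
  obtain K0 where K0: "\<And>f. f \<in> L2 M \<Longrightarrow> sqrt (sq2 M (\<lambda>x. f (T x))) \<le> \<bar>C\<bar> * sqrt (sq2 M f)"
    using C by (meson abs_ge_self mult_right_mono order_trans real_sqrt_ge_zero sq2_nonneg)
  show ?thesis
  proof (intro bexI[OF _ k(1)] ballI)
    fix u assume u: "u \<in> L2 M"
    define Kn where "Kn = sqrt (sq2 M k)"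
    have Kn0: "Kn \<ge> 0" unfolding Kn_def by (simp add: sq2_nonneg)
    define d where "d = cmod (l2inner M (\<lambda>x. u (T x)) (\<psi> j) - l2inner M u k)"
    have dle: "d \<le> (\<bar>C\<bar> + Kn) * sqrt (sq2 M (\<lambda>x. u x - projN M \<psi> n u x))" for n
    proof -
      define P where "P = projN M \<psi> n u"
      have P: "P \<in> L2 M" unfolding P_def by (rule projN_L2[OF ONB])
      have uP: "(\<lambda>x. u x - P x) \<in> L2 M" using u P by (rule L2_diff)
      have PT: "l2inner M (\<lambda>x. P (T x)) (\<psi> j) = (\<Sum>m<n. l2inner M u (\<psi> m) * \<beta> m)"
        unfolding P_def projN_def by (rule lin)
      have Pk: "l2inner M P k = (\<Sum>m<n. l2inner M u (\<psi> m) * \<beta> m)"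
      proof -
        have "l2inner M P k = (\<Sum>m<n. l2inner M (\<lambda>x. l2inner M u (\<psi> m) * \<psi> m x) k)"
          unfolding P_def projN_def using psi k(1) by (intro inner_sum1 L2_cmult) auto
        also have "\<dots> = (\<Sum>m<n. l2inner M u (\<psi> m) * \<beta> m)"
        proof (rule sum.cong)
          fix m show "l2inner M (\<lambda>x. l2inner M u (\<psi> m) * \<psi> m x) k = l2inner M u (\<psi> m) * \<beta> m"
            using inner_cnj[of M "\<psi> m" k] k(2)[of m] by (simp add: inner_cmult1)
        qed simp
        finally show ?thesis .
      qed
      have e1: "l2inner M (\<lambda>x. u (T x) - P (T x)) (\<psi> j) = l2inner M (\<lambda>x. u (T x)) (\<psi> j) - l2inner M (\<lambda>x. P (T x)) (\<psi> j)"
        by (rule inner_diff1[OF KL2[OF u] KL2[OF P] psi])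
      have e2: "l2inner M (\<lambda>x. u x - P x) k = l2inner M u k - l2inner M P k"
        by (rule inner_diff1[OF u P k(1)])
      have "l2inner M (\<lambda>x. u (T x)) (\<psi> j) - l2inner M u k =
            l2inner M (\<lambda>x. u (T x) - P (T x)) (\<psi> j) - l2inner M (\<lambda>x. u x - P x) k"
        using e1 e2 PT Pk by simp
      hence "d \<le> cmod (l2inner M (\<lambda>x. u (T x) - P (T x)) (\<psi> j)) + cmod (l2inner M (\<lambda>x. u x - P x) k)"
        unfolding d_def by (simp add: norm_triangle_ineq4)
      also have "cmod (l2inner M (\<lambda>x. u (T x) - P (T x)) (\<psi> j)) \<le> \<bar>C\<bar> * sqrt (sq2 M (\<lambda>x. u x - P x))"
      proof -
        have "cmod (l2inner M (\<lambda>x. u (T x) - P (T x)) (\<psi> j)) \<le> sqrt (sq2 M (\<lambda>x. u (T x) - P (T x))) * sqrt (sq2 M (\<psi> j))"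
          by (rule CS[OF KL2[OF uP] psi])
        also have "\<dots> \<le> \<bar>C\<bar> * sqrt (sq2 M (\<lambda>x. u x - P x))"
          using K0[OF uP] by (simp add: sq2_psi[OF ONB])
        finally show ?thesis .
      qed
      also have "cmod (l2inner M (\<lambda>x. u x - P x) k) \<le> sqrt (sq2 M (\<lambda>x. u x - P x)) * Kn"
        unfolding Kn_def by (rule CS[OF uP k(1)])
      finally show ?thesis unfolding P_def by (simp add: algebra_simps)
    qed
    have "d = 0"
    proof (rule ccontr)
      assume "d \<noteq> 0"
      hence dpos: "d > 0" unfolding d_def by simp
      define L where "L = \<bar>C\<bar> + Kn + 1"
      have L: "L > 0" "L \<ge> \<bar>C\<bar> + Kn" unfolding L_def using Kn0 by auto
      obtain n where n: "sq2 M (\<lambda>x. u x - projN M \<psi> n u x) < (d / L)\<^sup>2"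
        using dense[OF ONB u, of "(d/L)\<^sup>2" 0] dpos L by auto
      have t: "sqrt (sq2 M (\<lambda>x. u x - projN M \<psi> n u x)) < d / L"
        using real_sqrt_less_mono[OF n] dpos L by simp
      have "d \<le> (\<bar>C\<bar> + Kn) * sqrt (sq2 M (\<lambda>x. u x - projN M \<psi> n u x))" by (rule dle)
      also have "\<dots> \<le> L * sqrt (sq2 M (\<lambda>x. u x - projN M \<psi> n u x))"
        using L by (intro mult_right_mono) (auto simp: sq2_nonneg)
      also have "\<dots> < L * (d / L)" using t L by (intro mult_strict_left_mono) auto
      also have "\<dots> = d" using L by simp
      finally show False by simp
    qed
    thus "l2inner M (\<lambda>x. u (T x)) (\<psi> j) = l2inner M u k" unfolding d_def by simp
  qed
qed

lemma sq2_cmult: "sq2 M (\<lambda>x. c * f x) = (cmod c)\<^sup>2 * sq2 M f"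
  unfolding sq2_def by (simp add: norm_mult power_mult_distrib)

lemma diag_conv:
  fixes X :: "nat \<Rightarrow> nat \<Rightarrow> complex"
  assumes b: "\<And>k. bounded (range (X k))"
  shows "\<exists>d. strict_mono d \<and> (\<forall>k. convergent (\<lambda>i. X k (d i)))"
proof -
  interpret S: subseqs "\<lambda>k s. convergent (\<lambda>i. X k (s i))"
  proof
    fix k and s :: "nat \<Rightarrow> nat" assume "strict_mono s"
    have "bounded (range (X k \<circ> s))" using b[of k] by (rule bounded_subset) auto
    then obtain l r where "strict_mono r" "((X k \<circ> s) \<circ> r) \<longlonglongrightarrow> l"
      using bounded_imp_convergent_subsequence by blast
    thus "\<exists>r'. strict_mono r' \<and> convergent (\<lambda>i. X k ((s \<circ> r') i))"
      unfolding convergent_def by (auto simp: o_def)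
  qed
  have "convergent (\<lambda>i. X k (S.diagseq i))" for k
  proof -
    have "convergent (\<lambda>i. X k ((S.diagseq \<circ> (+) (Suc k)) i))"
    proof (rule S.diagseq_holds)
      fix r s n assume "strict_mono (r :: nat \<Rightarrow> nat)" "convergent (\<lambda>i. X n (s i))"
      thus "convergent (\<lambda>i. X n ((s \<circ> r) i))"
        unfolding convergent_def using LIMSEQ_subseq_LIMSEQ by (fastforce simp: o_def)
    qed
    hence "convergent (\<lambda>i. X k (S.diagseq (i + Suc k)))" by (simp add: o_def add.commute)
    thus ?thesis using convergent_ignore_initial_segment[of "\<lambda>i. X k (S.diagseq i)" "Suc k"] by simp
  qed
  thus ?thesis using S.subseq_diagseq by blast
qed

theorem theorem4:
  fixes M :: "'a::topological_space measure" and T :: "'a \<Rightarrow> 'a"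
    and \<psi> :: "nat \<Rightarrow> 'a \<Rightarrow> complex"
    and lam :: "nat \<Rightarrow> complex" and \<phi> :: "nat \<Rightarrow> 'a \<Rightarrow> complex"
  assumes "sets M = sets borel"
    and "koopman_bounded M T"
    and "orthonormal_basis M \<psi>"
    and "\<And>N. N \<ge> 1 \<Longrightarrow> eigenpair_KN M T \<psi> N (lam N) (\<phi> N)"
    and "\<And>N. N \<ge> 1 \<Longrightarrow> l2norm M (\<phi> N) = 1"
  shows "\<exists>r :: nat \<Rightarrow> nat. \<exists>l :: complex. \<exists>f :: 'a \<Rightarrow> complex.
           strict_mono r \<and> (\<forall>i. r i \<ge> 1) \<and>
           (lam \<circ> r) \<longlonglongrightarrow> l \<and>
           f \<in> L2 M \<and> weak_conv M (\<phi> \<circ> r) f \<and>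
           (AE x in M. f (T x) = l * f x) \<and>
           (l2norm M f \<noteq> 0 \<longrightarrow> (AE x in M. f (T x) = l * f x) \<and> \<not> (AE x in M. f x = 0))"
proof -
  note K = assms(2) and ONB = assms(3)
  note KL2 = koopman_D(1)[OF K]
  obtain C where C: "\<And>f. f \<in> L2 M \<Longrightarrow> sqrt (sq2 M (\<lambda>x. f (T x))) \<le> C * sqrt (sq2 M f)"
    using koopman_D(3)[OF K] by blast
  have psi: "\<psi> m \<in> L2 M" for m using ONB_D(1)[OF ONB] .
  have phiL2: "\<phi> N \<in> L2 M" if "N \<ge> 1" for N
    using assms(4)[OF that] unfolding eigenpair_KN_def in_FN_def by blast
  have eigAE: "AE x in M. projN M \<psi> N (\<lambda>x. \<phi> N (T x)) x = lam N * \<phi> N x" if "N \<ge> 1" for N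
    using assms(4)[OF that] unfolding eigenpair_KN_def by (simp add: o_def)
  have phin: "sq2 M (\<phi> N) = 1" if "N \<ge> 1" for N
    using assms(5)[OF that] unfolding l2norm_sq2 by simp
  have phiT_inner: "l2inner M (\<lambda>x. \<phi> N (T x)) (\<psi> j) = lam N * l2inner M (\<phi> N) (\<psi> j)"
    if N: "N \<ge> 1" and j: "j < N" for N j
  proof -
    have g: "(\<lambda>x. \<phi> N (T x)) \<in> L2 M" by (rule KL2[OF phiL2[OF N]])
    have "l2inner M (projN M \<psi> N (\<lambda>x. \<phi> N (T x))) (\<psi> j) = l2inner M (\<lambda>x. \<phi> N (T x)) (\<psi> j)"
      unfolding projN_def using ON_inner_comb[OF ONB, of "{..<N}" "\<lambda>i. l2inner M (\<lambda>x. \<phi> N (T x)) (\<psi> i)" j] j by simp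
    moreover have "l2inner M (projN M \<psi> N (\<lambda>x. \<phi> N (T x))) (\<psi> j) = l2inner M (\<lambda>x. lam N * \<phi> N x) (\<psi> j)"
      by (rule inner_cong1[OF eigAE[OF N]])
         (use L2_D(1)[OF projN_L2[OF ONB]] L2_D(1)[OF L2_cmult[OF phiL2[OF N]]] L2_D(1)[OF psi] in auto)
    ultimately show ?thesis by (simp add: inner_cmult1)
  qed
  have lam_bnd: "cmod (lam N) \<le> \<bar>C\<bar>" if N: "N \<ge> 1" for N
  proof -
    let ?g = "\<lambda>x. \<phi> N (T x)"
    have g: "?g \<in> L2 M" by (rule KL2[OF phiL2[OF N]])
    have "(cmod (lam N))\<^sup>2 = sq2 M (\<lambda>x. lam N * \<phi> N x)" by (simp add: sq2_cmult phin[OF N])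
    also have "\<dots> = sq2 M (projN M \<psi> N ?g)"
      by (rule sq2_cong) (use eigAE[OF N] L2_D(1)[OF projN_L2[OF ONB]] L2_D(1)[OF L2_cmult[OF phiL2[OF N]]] in \<open>auto simp: eq_commute\<close>)
    also have "\<dots> = (\<Sum>i<N. (cmod (l2inner M ?g (\<psi> i)))\<^sup>2)"
      unfolding projN_def by (rule ON_sq2_comb[OF ONB]) simp
    also have "\<dots> \<le> sq2 M ?g" by (rule bessel[OF ONB _ g]) simp
    also have "\<dots> \<le> C\<^sup>2"
    proof -
      have "sqrt (sq2 M ?g) \<le> C" using C[OF phiL2[OF N]] phin[OF N] by simp
      hence "(sqrt (sq2 M ?g))\<^sup>2 \<le> C\<^sup>2" by (intro power_mono) (auto simp: sq2_nonneg)
      thus ?thesis by (simp add: sq2_nonneg)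
    qed
    finally have "(cmod (lam N))\<^sup>2 \<le> \<bar>C\<bar>\<^sup>2" by simp
    thus ?thesis by (rule power2_le_imp_le) simp
  qed
  have coef_bnd: "cmod (l2inner M (\<phi> N) (\<psi> j)) \<le> 1" if N: "N \<ge> 1" for N j
    using CS[OF phiL2[OF N] psi[of j]] by (simp add: phin[OF N] sq2_psi[OF ONB])
  define X where "X k n = (case k of 0 \<Rightarrow> lam (Suc n) | Suc j \<Rightarrow> l2inner M (\<phi> (Suc n)) (\<psi> j))" for k n
  have "bounded (range (X k))" for k
  proof (cases k)
    case 0
    show ?thesis unfolding bounded_iff using lam_bnd by (auto simp: X_def 0)
  next
    case (Suc j)
    show ?thesis unfolding bounded_iff by (intro exI[of _ 1]) (auto simp: X_def Suc intro: coef_bnd)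
  qed
  then obtain d where d: "strict_mono d" "\<And>k. convergent (\<lambda>i. X k (d i))"
    using diag_conv by blast
  define r where "r i = Suc (d i)" for i
  have r: "strict_mono r" using d(1) unfolding r_def strict_mono_def by simp
  have r1: "r i \<ge> 1" for i unfolding r_def by simp
  have ri: "r i > i" for i unfolding r_def using seq_suble[OF d(1), of i] by simp
  define l where "l = lim (\<lambda>i. lam (r i))"
  define a where "a j = lim (\<lambda>i. l2inner M (\<phi> (r i)) (\<psi> j))" for j
  have laml: "(\<lambda>i. lam (r i)) \<longlonglongrightarrow> l"
    using d(2)[of 0] unfolding l_def r_def X_def by (simp add: convergent_LIMSEQ_iff)
  have coefl: "(\<lambda>i. l2inner M (\<phi> (r i)) (\<psi> j)) \<longlonglongrightarrow> a j" for j
    using d(2)[of "Suc j"] unfolding a_def r_def X_def by (simp add: convergent_LIMSEQ_iff)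
  have asum: "summable (\<lambda>j. (cmod (a j))\<^sup>2)"
  proof (rule summableI_nonneg_bounded[where x=1])
    fix n
    have "(\<lambda>i. \<Sum>j<n. (cmod (l2inner M (\<phi> (r i)) (\<psi> j)))\<^sup>2) \<longlonglongrightarrow> (\<Sum>j<n. (cmod (a j))\<^sup>2)"
      by (intro tendsto_intros coefl)
    moreover have "\<forall>i\<ge>0. (\<Sum>j<n. (cmod (l2inner M (\<phi> (r i)) (\<psi> j)))\<^sup>2) \<le> 1"
    proof (intro allI impI)
      fix i :: nat
      show "(\<Sum>j<n. (cmod (l2inner M (\<phi> (r i)) (\<psi> j)))\<^sup>2) \<le> 1"
        using bessel[OF ONB finite_lessThan phiL2[OF r1[of i]]] phin[OF r1[of i]] by simp
    qed
    ultimately show "(\<Sum>j<n. (cmod (a j))\<^sup>2) \<le> 1" by (intro LIMSEQ_le_const2) auto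
  qed simp
  obtain f where f: "f \<in> L2 M" "\<And>j. l2inner M f (\<psi> j) = a j"
    using RF[OF ONB asum] by blast
  have weak: "weak_conv M (\<phi> \<circ> r) f"
  proof (rule WC[OF ONB _ _ f(1)])
    show "(\<phi> \<circ> r) i \<in> L2 M" for i using phiL2[OF r1] by simp
    show "sq2 M ((\<phi> \<circ> r) i) \<le> 1" for i using phin[OF r1] by simp
    show "(\<lambda>i. l2inner M ((\<phi> \<circ> r) i) (\<psi> j)) \<longlonglongrightarrow> l2inner M f (\<psi> j)" for j
      using coefl[of j] f(2)[of j] by simp
  qed
  have fT: "(\<lambda>x. f (T x)) \<in> L2 M" by (rule KL2[OF f(1)])
  have eigf: "l2inner M (\<lambda>x. f (T x)) (\<psi> j) = l * a j" for j
  proof -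
    obtain k where k: "k \<in> L2 M" "\<And>u. u \<in> L2 M \<Longrightarrow> l2inner M (\<lambda>x. u (T x)) (\<psi> j) = l2inner M u k"
      using riesz[OF ONB K, of j] by blast
    have lim1: "(\<lambda>i. l2inner M (\<phi> (r i)) k) \<longlonglongrightarrow> l2inner M f k"
      using weak k(1) unfolding weak_conv_def by (simp add: o_def)
    have lim2: "(\<lambda>i. lam (r i) * l2inner M (\<phi> (r i)) (\<psi> j)) \<longlonglongrightarrow> l * a j"
      by (intro tendsto_intros laml coefl)
    have ev: "\<forall>\<^sub>F i in sequentially. lam (r i) * l2inner M (\<phi> (r i)) (\<psi> j) = l2inner M (\<phi> (r i)) k"
      using eventually_ge_at_top[of j]
    proof eventually_elim
      case (elim i)
      have "j < r i" using ri[of i] elim by simp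
      thus ?case using phiT_inner[OF r1, of j i] k(2)[OF phiL2[OF r1]] by simp
    qed
    have "(\<lambda>i. l2inner M (\<phi> (r i)) k) \<longlonglongrightarrow> l * a j"
      by (rule Lim_transform_eventually[OF lim2 ev])
    hence "l2inner M f k = l * a j" by (rule LIMSEQ_unique[OF lim1])
    thus ?thesis using k(2)[OF f(1)] by simp
  qed
  have AEf: "AE x in M. f (T x) = l * f x"
  proof -
    have v: "(\<lambda>x. f (T x) - l * f x) \<in> L2 M" using fT L2_cmult[OF f(1)] by (rule L2_diff)
    have "AE x in M. f (T x) - l * f x = 0"
    proof (rule ONB_D(3)[OF ONB v])
      fix j show "l2inner M (\<lambda>x. f (T x) - l * f x) (\<psi> j) = 0"
        using inner_diff1[OF fT L2_cmult[OF f(1)] psi[of j]] eigf[of j] f(2)[of j]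
        by (simp add: inner_cmult1)
    qed
    thus ?thesis by simp
  qed
  have last: "\<not> (AE x in M. f x = 0)" if "l2norm M f \<noteq> 0"
  proof
    assume "AE x in M. f x = 0"
    hence "sq2 M f = 0" using sq2_zero_iff[OF f(1)] by simp
    thus False using that by (simp add: l2norm_sq2)
  qed
  have laml': "(lam \<circ> r) \<longlonglongrightarrow> l" using laml by (simp add: o_def)
  show ?thesis
    apply (rule exI[of _ r], rule exI[of _ l], rule exI[of _ f])
    using r r1 laml' f(1) weak AEf last by blast
qed

end
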